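(* Let $\alpha\in(0,\frac{\pi}{2}]$ and let $S$ be a finite set of line segments in the plane such that any two segments of $S$ that cross do so at angle $\alpha$. Then there exists a subset $S'\subset S$ of pairwise noncrossing segments with $|S'|\geq|S|/3$.
   Context: Segments in $S$ may overlap. Two segments cross if they intersect in a single point lying in the relative interior of both (alternatively, given a set $V$ of segment endpoints, if they intersect in a single point not in $V$). Two segments cross at angle $\alpha$ if the lines containing them meet at angle $\alpha$ (equivalently $\pi-\alpha$). *)

theory Defs
  imports "HOL-Analysis.Analysis"
begin

definition is_segment :: "complex set \<Rightarrow> bool" where
  "is_segment s \<longleftrightarrow> (\<exists>a b. a \<noteq> b \<and> s = closed_segment a b)"

definition crosses :: "complex set \<Rightarrow> complex set \<Rightarrow> bool" where
  "crosses s t \<longleftrightarrow> (\<exists>x. s \<inter> t = {x} \<and> x \<in> rel_interior s \<and> x \<in> rel_interior t)"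

definition line_angle :: "complex \<Rightarrow> complex \<Rightarrow> complex \<Rightarrow> complex \<Rightarrow> real" where
  "line_angle a b c d = arccos (\<bar>(b - a) \<bullet> (d - c)\<bar> / (norm (b - a) * norm (d - c)))"

definition segs_angle :: "complex set \<Rightarrow> complex set \<Rightarrow> real \<Rightarrow> bool" where
  "segs_angle s t \<alpha> \<longleftrightarrow> (\<exists>a b c d. a \<noteq> b \<and> c \<noteq> d \<and> s = closed_segment a b \<and>
      t = closed_segment c d \<and> (line_angle a b c d = \<alpha> \<or> line_angle a b c d = pi - \<alpha>))"

end

theory Submission
  imports Defs
begin


lemma color3:
  fixes W :: "'a set" and R :: "'a \<Rightarrow> 'a \<Rightarrow> bool"
  assumes "finite W" and irr: "\<And>x. \<not> R x x"
    and nb: "\<And>x v. R x v \<or> R v x \<Longrightarrow> v = f x \<or> v = g x"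
  shows "\<exists>c::'a \<Rightarrow> nat. (\<forall>x. c x < (3::nat)) \<and> (\<forall>v\<in>W. \<forall>w\<in>W. R v w \<longrightarrow> c v \<noteq> c w)"
  using assms(1)
proof (induction W rule: finite_induct)
  case empty
  then show ?case by (rule_tac x="\<lambda>_. 0" in exI) auto
next
  case (insert x F)
  then obtain c :: "'a \<Rightarrow> nat" where c: "\<forall>x. c x < 3" "\<forall>v\<in>F. \<forall>w\<in>F. R v w \<longrightarrow> c v \<noteq> c w" by blast
  define k where "k = (if c (f x) \<noteq> 0 \<and> c (g x) \<noteq> 0 then 0 else if c (f x) \<noteq> 1 \<and> c (g x) \<noteq> 1 then 1 else (2::nat))"
  have k: "k < 3" "k \<noteq> c (f x)" "k \<noteq> c (g x)" unfolding k_def by auto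
  show ?case
  proof (rule exI[of _ "c(x:=k)"], intro conjI ballI impI allI)
    fix y show "(c(x:=k)) y < 3" using c k by auto
  next
    fix v w assume vw: "v \<in> insert x F" "w \<in> insert x F" "R v w"
    show "(c(x:=k)) v \<noteq> (c(x:=k)) w"
    proof (cases "v = x")
      case True
      then have "w \<noteq> x" using irr vw by blast
      moreover have "w = f x \<or> w = g x" using nb vw True by blast
      ultimately show ?thesis using True k by auto
    next
      case False
      show ?thesis
      proof (cases "w = x")
        case True
        have "v = f x \<or> v = g x" using nb vw True by blast
        then show ?thesis using True False k by auto
      next
        case False2: False
        then show ?thesis using False vw c by auto
      qed
    qed
  qed
qed

definition dir :: "complex set \<Rightarrow> complex" where
  "dir s = (SOME w. \<exists>a b. a \<noteq> b \<and> s = closed_segment a b \<and> w = (sgn (b - a))^2)"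

lemma dir_eq: assumes "a \<noteq> b" shows "dir (closed_segment a b) = (sgn (b - a))^2"
proof -
  have "\<exists>a' b'. a' \<noteq> b' \<and> closed_segment a b = closed_segment a' b' \<and> (sgn (b - a))^2 = (sgn (b' - a'))^2"
    using assms by blast
  then have ex: "\<exists>w. \<exists>a' b'. a' \<noteq> b' \<and> closed_segment a b = closed_segment a' b' \<and> w = (sgn (b' - a'))^2"
    by metis
  have uniq: "w = (sgn (b - a))^2" if "\<exists>a' b'. a' \<noteq> b' \<and> closed_segment a b = closed_segment a' b' \<and> w = (sgn (b' - a'))^2" for w
  proof -
    from that obtain a' b' where h: "a' \<noteq> b'" "closed_segment a b = closed_segment a' b'" "w = (sgn (b' - a'))^2" by blast
    then have "{a,b} = {a',b'}" by simp
    moreover have "sgn (a - b) = - sgn (b - a)" by (metis minus_diff_eq sgn_minus)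
    ultimately show ?thesis using h assms by (auto simp: doubleton_eq_iff power2_eq_square)
  qed
  show ?thesis unfolding dir_def using someI_ex[OF ex] uniq by blast
qed



lemma key:
  fixes a b c d :: complex and \<alpha> :: real
  assumes ab: "a \<noteq> b" and cd: "c \<noteq> d" and al: "0 < \<alpha>" "\<alpha> \<le> pi/2"
    and ang: "line_angle a b c d = \<alpha> \<or> line_angle a b c d = pi - \<alpha>"
  shows "sgn (b - a)^2 = sgn (d - c)^2 * Complex (cos (2*\<alpha>)) (sin (2*\<alpha>))
       \<or> sgn (d - c)^2 = sgn (b - a)^2 * Complex (cos (2*\<alpha>)) (sin (2*\<alpha>))"
proof -
  define u where "u = sgn (b - a)"
  define v where "v = sgn (d - c)"
  define \<rho> where "\<rho> = Complex (cos (2*\<alpha>)) (sin (2*\<alpha>))"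
  have nu: "norm u = 1" and nv: "norm v = 1" using ab cd by (auto simp: u_def v_def norm_sgn)
  have eq1: "(b - a) \<bullet> (d - c) / (norm (b - a) * norm (d - c)) = u \<bullet> v"
    unfolding u_def v_def sgn_div_norm by (simp add: divide_simps)
  define y where "y = \<bar>u \<bullet> v\<bar>"
  have y0: "0 \<le> y" and y1: "y \<le> 1" unfolding y_def using Cauchy_Schwarz_ineq2[of u v] nu nv by auto
  have la: "line_angle a b c d = arccos y" unfolding line_angle_def y_def eq1[symmetric]
    by (simp add: abs_divide abs_mult)
  have "arccos y = \<alpha>"
  proof (cases "arccos y = \<alpha>")
    case False
    then have "arccos y = pi - \<alpha>" using ang la by auto
    moreover have "arccos y \<le> pi/2" using arccos_le_pi2 y0 y1 by blast
    ultimately show ?thesis using al by auto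
  qed
  then have ycos: "y = cos \<alpha>" using y0 y1 cos_arccos by (metis le_minus_one_simps(1) order_trans)
  define z where "z = u * cnj v"
  have uz: "u = z * v" unfolding z_def using nv
    by (metis complex_norm_square mult.assoc mult.commute mult.right_neutral of_real_1 power_one)
  have rez: "Re z = u \<bullet> v" unfolding z_def inner_complex_def by simp
  have nz: "norm z = 1" unfolding z_def using nu nv by (simp add: norm_mult)
  have xx: "(Re z)^2 = (cos \<alpha>)^2" using rez ycos y_def by (metis power2_abs)
  have n2: "(Re z)^2 + (Im z)^2 = 1" using nz by (metis cmod_power2 one_power2)
  have yy: "(Im z)^2 = (sin \<alpha>)^2" using xx n2 sin_cos_squared_add[of \<alpha>] by linarith
  have "(Re z * Im z)^2 = (cos \<alpha> * sin \<alpha>)^2" using xx yy by (simp add: power_mult_distrib)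
  then have xy: "Re z * Im z = cos \<alpha> * sin \<alpha> \<or> Re z * Im z = - (cos \<alpha> * sin \<alpha>)"
    using power2_eq_iff by blast
  have zsq: "z^2 = Complex ((Re z)^2 - (Im z)^2) (2 * Re z * Im z)"
    by (simp add: complex_eq_iff power2_eq_square)
  have c2: "cos (2*\<alpha>) = (cos \<alpha>)^2 - (sin \<alpha>)^2" by (simp add: cos_double)
  have s2: "sin (2*\<alpha>) = 2 * sin \<alpha> * cos \<alpha>" by (simp add: sin_double)
  have rr: "\<rho> * cnj \<rho> = 1" unfolding \<rho>_def
    by (simp add: complex_eq_iff)
  from xy show ?thesis
  proof
    assume h: "Re z * Im z = cos \<alpha> * sin \<alpha>"
    have "z^2 = \<rho>" unfolding zsq \<rho>_def c2 s2 using xx yy h by (simp add: mult.commute mult.left_commute)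
    then have "u^2 = v^2 * \<rho>" using uz by (simp add: power_mult_distrib mult.commute)
    then show ?thesis unfolding u_def v_def \<rho>_def by blast
  next
    assume h: "Re z * Im z = - (cos \<alpha> * sin \<alpha>)"
    have "z^2 = cnj \<rho>" unfolding zsq \<rho>_def c2 s2 using xx yy h by (simp add: complex_eq_iff mult.commute mult.left_commute)
    then have "u^2 = v^2 * cnj \<rho>" using uz by (simp add: power_mult_distrib mult.commute)
    then have "u^2 * \<rho> = v^2" using rr by (metis mult.assoc mult.commute mult.right_neutral)
    then show ?thesis unfolding u_def v_def \<rho>_def by (metis mult.commute)
  qed
qed



theorem corollary16:
  fixes S :: "complex set set" and \<alpha> :: real
  assumes "0 < \<alpha>" and "\<alpha> \<le> pi / 2"
    and "finite S" and "\<forall>s\<in>S. is_segment s"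
    and "\<forall>s\<in>S. \<forall>t\<in>S. crosses s t \<longrightarrow> segs_angle s t \<alpha>"
  shows "\<exists>S'\<subseteq>S. (\<forall>s\<in>S'. \<forall>t\<in>S'. \<not> crosses s t) \<and> real (card S) \<le> 3 * real (card S')"
proof -
  define \<rho> where "\<rho> = Complex (cos (2*\<alpha>)) (sin (2*\<alpha>))"
  have "cos (2*\<alpha>) < cos 0" using assms(1,2) by (intro cos_monotone_0_pi) auto
  then have r1: "\<rho> \<noteq> 1" unfolding \<rho>_def by (auto simp: complex_eq_iff)
  have rr: "\<rho> * cnj \<rho> = 1" unfolding \<rho>_def by (simp add: complex_eq_iff)
  define R where "R = (\<lambda>v w::complex. v \<noteq> 0 \<and> w = v * \<rho>)"
  have irr: "\<And>x. \<not> R x x" unfolding R_def using r1 by auto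
  have nb: "v = x * \<rho> \<or> v = x * cnj \<rho>" if "R x v \<or> R v x" for x v
  proof (cases "R x v")
    case True then show ?thesis unfolding R_def by simp
  next
    case False
    then have "x = v * \<rho>" using that unfolding R_def by auto
    then have "x * cnj \<rho> = v * (\<rho> * cnj \<rho>)" by (simp add: mult.assoc)
    then show ?thesis using rr by simp
  qed
  obtain col :: "complex \<Rightarrow> nat" where col: "\<forall>x. col x < 3"
    "\<forall>v\<in>dir ` S. \<forall>w\<in>dir ` S. R v w \<longrightarrow> col v \<noteq> col w"
    using color3[of "dir ` S" R "\<lambda>x. x * \<rho>" "\<lambda>x. x * cnj \<rho>", OF _ irr nb] assms(3) by blast
  have diff: "col (dir s) \<noteq> col (dir t)" if st: "s \<in> S" "t \<in> S" "crosses s t" for s t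
  proof -
    obtain a b c d where h: "a \<noteq> b" "c \<noteq> d" "s = closed_segment a b" "t = closed_segment c d"
      "line_angle a b c d = \<alpha> \<or> line_angle a b c d = pi - \<alpha>"
      using assms(5) st unfolding segs_angle_def by blast
    have ds: "dir s = sgn (b - a)^2" using dir_eq[OF h(1)] h(3) by simp
    have dt: "dir t = sgn (d - c)^2" using dir_eq[OF h(2)] h(4) by simp
    have n1: "dir s \<noteq> 0" unfolding ds using h(1) by (simp add: sgn_eq_0_iff)
    have n2: "dir t \<noteq> 0" unfolding dt using h(2) by (simp add: sgn_eq_0_iff)
    have "dir s = dir t * \<rho> \<or> dir t = dir s * \<rho>"
      using key[OF h(1,2) assms(1,2) h(5)] unfolding ds dt \<rho>_def .
    then have "R (dir t) (dir s) \<or> R (dir s) (dir t)"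
      unfolding R_def using n1 n2 by blast
    moreover have "dir s \<in> dir ` S" "dir t \<in> dir ` S" using st by auto
    ultimately show ?thesis using col(2) by (metis (no_types, lifting))
  qed
  define A where "A = (\<lambda>i. {s\<in>S. col (dir s) = i})"
  have nc: "\<forall>s\<in>A i. \<forall>t\<in>A i. \<not> crosses s t" for i unfolding A_def using diff by blast
  have sub: "A i \<subseteq> S" for i unfolding A_def by auto
  have "S = A 0 \<union> A 1 \<union> A 2"
  proof
    show "S \<subseteq> A 0 \<union> A 1 \<union> A 2"
    proof
      fix s assume s: "s \<in> S"
      have "col (dir s) < 3" using col(1) by blast
      then have "col (dir s) = 0 \<or> col (dir s) = 1 \<or> col (dir s) = 2" by linarith
      then show "s \<in> A 0 \<union> A 1 \<union> A 2" unfolding A_def using s by blast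
    qed
  qed (use sub in blast)
  then have "card S \<le> card (A 0 \<union> A 1) + card (A 2)" using card_Un_le[of "A 0 \<union> A 1" "A 2"] by simp
  also have "\<dots> \<le> card (A 0) + card (A 1) + card (A 2)" using card_Un_le[of "A 0" "A 1"] by simp
  finally have le: "card S \<le> card (A 0) + card (A 1) + card (A 2)" .
  have "\<exists>i. real (card S) \<le> 3 * real (card (A i))"
  proof (cases "card (A 1) \<le> card (A 0) \<and> card (A 2) \<le> card (A 0)")
    case True then show ?thesis using le by (intro exI[of _ 0]) linarith
  next
    case False
    then show ?thesis
    proof (cases "card (A 2) \<le> card (A 1)")
      case True then show ?thesis using le False by (intro exI[of _ 1]) linarith
    next
      case False2: False then show ?thesis using le False by (intro exI[of _ 2]) linarith
    qed
  qed
  then obtain i where i: "real (card S) \<le> 3 * real (card (A i))" by blast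
  show ?thesis
    by (rule exI[of _ "A i"]) (use sub[of i] nc[of i] i in simp)
qed

end
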